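(* Let $f(u)=e^{g(u)}$ where $g\in C^3[0,\infty)$ satisfies $g'>0$, $g''>0$, $g'^2-g''\ge0$ and $2g''^2-g'g'''>0$ on $[0,\infty)$. Then: (i) $\lim_{u\to\infty}f'(u)F(u)=1$ and $\lim_{u\to\infty}\frac{f'(u)^2}{f(u)f''(u)}=1$; (ii) $2f(u)f''(u)^2-f'(u)^2f''(u)-f(u)f'(u)f'''(u)>0$ for $u\ge0$; (iii) $F(u)-\frac{f'(u)}{f(u)f''(u)}>0$ for $u\ge0$; (iv) $h(y)\to0$ as $y\to\infty$; (v) $h'(y)<0$ for $y\ge-\log F(0)$.
   Context: $F(u)=\int_u^\infty\frac{ds}{f(s)}$ (finite), $\eta(y)=F^{-1}(e^{-y})$ for $y\ge-\log F(0)$, where $F^{-1}$ is the inverse of the decreasing function $F$, and $h(y)=1-f'(\eta(y))F(\eta(y))$ for $y\ge-\log F(0)$. *)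

theory Defs
  imports "HOL-Analysis.Analysis"
begin

definition Fint :: "(real \<Rightarrow> real) \<Rightarrow> real \<Rightarrow> real" where
  "Fint f u = integral {u..} (\<lambda>s. 1 / f s)"

definition eta :: "(real \<Rightarrow> real) \<Rightarrow> real \<Rightarrow> real" where
  "eta f y = the_inv_into {0..} (Fint f) (exp (- y))"

text \<open>h(y) = 1 - f'(eta y) F(eta y); f1 is the derivative of f.\<close>
definition hfun :: "(real \<Rightarrow> real) \<Rightarrow> (real \<Rightarrow> real) \<Rightarrow> real \<Rightarrow> real" where
  "hfun f f1 y = 1 - f1 (eta f y) * Fint f (eta f y)"

end

theory Submission
  imports Defs
begin


lemma at_Ici_Icc: "(x::real) < b \<Longrightarrow> at x within {a..} = at x within {a..b}"
  by (rule at_within_nhd[of x "{..<b}"]) auto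

lemma at_Ici_nontriv: "(a::real) \<le> x \<Longrightarrow> at x within {a..} \<noteq> bot"
proof -
  assume "a \<le> x"
  have "x islimpt {a..}"
    unfolding islimpt_approachable
  proof (intro allI impI)
    fix e :: real assume "e > 0"
    then show "\<exists>x'\<in>{a..}. x' \<noteq> x \<and> dist x' x < e"
      using \<open>a \<le> x\<close> by (intro bexI[of _ "x + e/2"]) (auto simp: dist_real_def)
  qed
  then show ?thesis using trivial_limit_within by blast
qed

lemma deriv_unique_Ici:
  assumes "(a::real) \<le> x" "(h has_real_derivative A) (at x within {a..})"
    "(h has_real_derivative B) (at x within {a..})"
  shows "A = B"
  using assms tendsto_unique[OF at_Ici_nontriv[OF assms(1)]]
  by (auto simp: has_field_derivative_iff)

lemma at_Ici_interior: "(a::real) < x \<Longrightarrow> at x within {a..} = at x"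
  by (rule at_within_interior) simp

lemma mono_Ici:
  assumes d: "\<And>x. x \<ge> a \<Longrightarrow> (h has_real_derivative h' x) (at x within {a..})"
    and nn: "\<And>x. x \<ge> (a::real) \<Longrightarrow> h' x \<ge> 0" and "a \<le> x" "x \<le> y"
  shows "h x \<le> h y"
proof (rule DERIV_nonneg_imp_increasing_open[OF \<open>x \<le> y\<close>])
  have "continuous_on {a..} h" by (rule DERIV_continuous_on[OF d]) auto
  then show "continuous_on {x..y} h" by (rule continuous_on_subset) (use assms in auto)
  fix z assume "x < z" "z < y"
  then show "\<exists>y. DERIV h z :> y \<and> 0 \<le> y"
    using d[of z] nn[of z] at_Ici_interior[of a z] assms by (intro exI[of _ "h' z"]) auto
qed

lemma smono_Ici:
  assumes d: "\<And>x. x \<ge> a \<Longrightarrow> (h has_real_derivative h' x) (at x within {a..})"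
    and nn: "\<And>x. x \<ge> (a::real) \<Longrightarrow> h' x > 0" and "a \<le> x" "x < y"
  shows "h x < h y"
proof (rule DERIV_pos_imp_increasing_open[OF \<open>x < y\<close>])
  have "continuous_on {a..} h" by (rule DERIV_continuous_on[OF d]) auto
  then show "continuous_on {x..y} h" by (rule continuous_on_subset) (use assms in auto)
  fix z assume "x < z" "z < y"
  then show "\<exists>y. DERIV h z :> y \<and> 0 < y"
    using d[of z] nn[of z] at_Ici_interior[of a z] assms by (intro exI[of _ "h' z"]) auto
qed

lemma lim_nonneg_Ici:
  assumes d: "\<And>x. x \<ge> a \<Longrightarrow> (h has_real_derivative h' x) (at x within {a..})"
    and np: "\<And>x. x \<ge> (a::real) \<Longrightarrow> h' x \<le> 0" and lim: "(h \<longlongrightarrow> 0) at_top"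
  shows "h a \<ge> 0"
proof -
  have "-h a \<le> -h x" if "x \<ge> a" for x
    by (rule mono_Ici[of a "\<lambda>x. - h x" "\<lambda>x. - h' x"]) (use d np that in \<open>auto intro!: derivative_eq_intros\<close>)
  then have "eventually (\<lambda>x. h x \<le> h a) at_top"
    by (intro eventually_mono[OF eventually_ge_at_top[of a]]) force
  then show ?thesis using tendsto_le[OF trivial_limit_at_top_linorder tendsto_const lim] by blast
qed

lemma lim_pos_Ici:
  assumes d: "\<And>x. x \<ge> a \<Longrightarrow> (h has_real_derivative h' x) (at x within {a..})"
    and np: "\<And>x. x \<ge> (a::real) \<Longrightarrow> h' x < 0" and lim: "(h \<longlongrightarrow> 0) at_top"
  shows "h a > 0"
proof -
  have "-h a < -h (a+1)"
    by (rule smono_Ici[of a "\<lambda>x. - h x" "\<lambda>x. - h' x"]) (use d np in \<open>auto intro!: derivative_eq_intros\<close>)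
  moreover have "h (a+1) \<ge> 0"
    by (rule lim_nonneg_Ici[of "a+1" h h']) (use np lim in \<open>auto intro: has_field_derivative_subset[OF d] less_imp_le\<close>)
  ultimately show ?thesis by simp
qed

lemma inv_deriv:
  fixes G \<eta> :: "real \<Rightarrow> real"
  assumes G: "(G has_real_derivative G') (at u0 within A)" and G0: "G' \<noteq> 0"
    and cont: "(\<eta> \<longlongrightarrow> u0) (at y within S)"
    and maps: "\<And>z. z \<in> S \<Longrightarrow> \<eta> z \<in> A \<and> G (\<eta> z) = z"
    and y: "\<eta> y = u0" "y \<in> S"
  shows "(\<eta> has_real_derivative 1/G') (at y within S)"
proof -
  define Q where "Q u = (G u - G u0) / (u - u0)" for u
  have Q: "(Q \<longlongrightarrow> G') (at u0 within A)"
    using G unfolding has_field_derivative_iff Q_def .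
  have ev: "eventually (\<lambda>z. z \<in> S \<and> z \<noteq> y) (at y within S)"
    by (simp add: eventually_at_filter)
  have ne: "\<eta> z \<noteq> u0" if "z \<in> S" "z \<noteq> y" for z
    using maps[OF that(1)] maps[OF y(2)] y(1) that by metis
  have "filterlim \<eta> (at u0 within A) (at y within S)"
    unfolding filterlim_at using cont ev ne maps by (auto elim!: eventually_mono)
  then have "((\<lambda>z. Q (\<eta> z)) \<longlongrightarrow> G') (at y within S)"
    using Q filterlim_compose[of Q "nhds G'" "at u0 within A" \<eta> "at y within S"] by blast
  then have "((\<lambda>z. 1 / Q (\<eta> z)) \<longlongrightarrow> 1 / G') (at y within S)"
    using G0 by (intro tendsto_intros) auto
  moreover have "eventually (\<lambda>z. 1 / Q (\<eta> z) = (\<eta> z - \<eta> y) / (z - y)) (at y within S)"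
    using ev
  proof (rule eventually_mono)
    fix z assume z: "z \<in> S \<and> z \<noteq> y"
    then show "1 / Q (\<eta> z) = (\<eta> z - \<eta> y) / (z - y)"
      using maps[of z] maps[OF y(2)] y(1) unfolding Q_def by auto
  qed
  ultimately show ?thesis
    unfolding has_field_derivative_iff by (rule Lim_transform_eventually)
qed

lemma exp_bound_lim:
  assumes "(c::real) > 0"
  shows "((\<lambda>u. K * (exp (-c*u)/c)) \<longlongrightarrow> 0) at_top"
proof -
  have "filterlim (\<lambda>u. c*u) at_top at_top"
    using assms by (intro filterlim_tendsto_pos_mult_at_top[OF tendsto_const] filterlim_ident) auto
  then have "filterlim (\<lambda>u. -(c*u)) at_bot at_top"
    by (simp add: filterlim_uminus_at_bot)
  then have "((\<lambda>u. exp (-(c*u))) \<longlongrightarrow> 0) at_top"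
    by (rule filterlim_compose[OF exp_at_bot])
  then show ?thesis by (intro tendsto_mult_right_zero tendsto_divide_zero) simp
qed



theorem lemma3p2:
  fixes g g1 g2 g3 f f1 f2 f3 :: "real \<Rightarrow> real"
  assumes g1: "\<And>x. x \<ge> 0 \<Longrightarrow> (g has_real_derivative g1 x) (at x within {0..})"
      and g2: "\<And>x. x \<ge> 0 \<Longrightarrow> (g1 has_real_derivative g2 x) (at x within {0..})"
      and g3: "\<And>x. x \<ge> 0 \<Longrightarrow> (g2 has_real_derivative g3 x) (at x within {0..})"
      and g3_cont: "continuous_on {0..} g3"
      and g1_pos: "\<And>x. x \<ge> 0 \<Longrightarrow> g1 x > 0"
      and g2_pos: "\<And>x. x \<ge> 0 \<Longrightarrow> g2 x > 0"
      and g_ineq1: "\<And>x. x \<ge> 0 \<Longrightarrow> (g1 x)\<^sup>2 - g2 x \<ge> 0"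
      and g_ineq2: "\<And>x. x \<ge> 0 \<Longrightarrow> 2 * (g2 x)\<^sup>2 - g1 x * g3 x > 0"
      and f_def: "f = (\<lambda>u. exp (g u))"
      and f1: "\<And>x. x \<ge> 0 \<Longrightarrow> (f has_real_derivative f1 x) (at x within {0..})"
      and f2: "\<And>x. x \<ge> 0 \<Longrightarrow> (f1 has_real_derivative f2 x) (at x within {0..})"
      and f3: "\<And>x. x \<ge> 0 \<Longrightarrow> (f2 has_real_derivative f3 x) (at x within {0..})"
  shows "((\<lambda>u. f1 u * Fint f u) \<longlongrightarrow> 1) at_top
       \<and> ((\<lambda>u. (f1 u)\<^sup>2 / (f u * f2 u)) \<longlongrightarrow> 1) at_top
       \<and> (\<forall>u\<ge>0. 2 * f u * (f2 u)\<^sup>2 - (f1 u)\<^sup>2 * f2 u - f u * f1 u * f3 u > 0)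
       \<and> (\<forall>u\<ge>0. Fint f u - f1 u / (f u * f2 u) > 0)
       \<and> (hfun f f1 \<longlongrightarrow> 0) at_top
       \<and> (\<forall>y\<ge>- ln (Fint f 0). \<exists>D. (hfun f f1 has_real_derivative D)
              (at y within {- ln (Fint f 0)..}) \<and> D < 0)"
proof -
  define F where "F = Fint f"
  have finv: "1 / f s = exp (- g s)" for s by (simp add: f_def exp_minus field_simps)
  have dexpg: "((\<lambda>u. exp (g u)) has_real_derivative exp (g x) * g1 x) (at x within {0..})"
    if "x \<ge> 0" for x
    using g1[OF that] by (auto intro!: derivative_eq_intros)
  have f1e: "f1 x = g1 x * exp (g x)" if "x \<ge> 0" for x
    using deriv_unique_Ici[OF that f1[OF that, unfolded f_def] dexpg[OF that]] by simp
  have dF1: "((\<lambda>u. g1 u * exp (g u)) has_real_derivative (g2 x + (g1 x)\<^sup>2) * exp (g x)) (at x within {0..})"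
    if "x \<ge> 0" for x
    using g1[OF that] g2[OF that] by (auto intro!: derivative_eq_intros simp: power2_eq_square algebra_simps)
  have "(f1 has_real_derivative (g2 x + (g1 x)\<^sup>2) * exp (g x)) (at x within {0..})" if "x \<ge> 0" for x
    by (rule has_field_derivative_transform_within[OF dF1[OF that] zero_less_one]) (use that f1e in auto)
  then have f2e: "f2 x = (g2 x + (g1 x)\<^sup>2) * exp (g x)" if "x \<ge> 0" for x
    using deriv_unique_Ici[OF that f2[OF that]] that by blast
  have dF2: "((\<lambda>u. (g2 u + (g1 u)\<^sup>2) * exp (g u)) has_real_derivative
       (g3 x + 3 * g1 x * g2 x + (g1 x)^3) * exp (g x)) (at x within {0..})"
    if "x \<ge> 0" for x
    using g1[OF that] g2[OF that] g3[OF that]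
    by (auto intro!: derivative_eq_intros simp: power2_eq_square power3_eq_cube algebra_simps)
  have "(f2 has_real_derivative (g3 x + 3 * g1 x * g2 x + (g1 x)^3) * exp (g x)) (at x within {0..})" if "x \<ge> 0" for x
    by (rule has_field_derivative_transform_within[OF dF2[OF that] zero_less_one]) (use that f2e in auto)
  then have f3e: "f3 x = (g3 x + 3 * g1 x * g2 x + (g1 x)^3) * exp (g x)" if "x \<ge> 0" for x
    using deriv_unique_Ici[OF that f3[OF that]] that by blast
  define c where "c = g1 0"
  have c_pos: "c > 0" using g1_pos[of 0] by (simp add: c_def)
  have g1_ge: "g1 x \<ge> c" if "x \<ge> 0" for x
    unfolding c_def by (rule mono_Ici[OF g2 less_imp_le[OF g2_pos]]) (use that in auto)
  have g_ge: "g x \<ge> g 0 + c * x" if "x \<ge> 0" for x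
  proof -
    have "g 0 - c * 0 \<le> g x - c * x"
      by (rule mono_Ici[of 0 "\<lambda>u. g u - c * u" "\<lambda>u. g1 u - c"])
         (use that g1_ge in \<open>auto intro!: derivative_eq_intros g1\<close>)
    then show ?thesis by simp
  qed
  have g_cont: "continuous_on {0..} g" by (rule DERIV_continuous_on[OF g1]) auto
  define B where "B u = exp (- g 0) * (exp (- c * u) / c)" for u
  have bnd: "exp (- g s) \<le> exp (- g 0) * exp (- c * s)" if "s \<ge> 0" for s
    using g_ge[OF that] by (simp add: mult_exp_exp)
  have Bint: "((\<lambda>s. exp (- g 0) * exp (- c * s)) has_integral B u) {u..}" for u
    unfolding B_def by (intro has_integral_mult_right has_integral_exp_minus_to_infinity c_pos)
  have eint: "(\<lambda>s. 1 / f s) integrable_on {u..}" if "u \<ge> 0" for u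
  proof (rule measurable_bounded_by_integrable_imp_integrable_real)
    have "continuous_on {u..} (\<lambda>s. exp (- g s))"
      by (intro continuous_intros continuous_on_subset[OF g_cont]) (use that in auto)
    then show "(\<lambda>s. 1 / f s) \<in> borel_measurable (lebesgue_on {u..})"
      unfolding finv by (rule continuous_imp_measurable_on_sets_lebesgue) simp
    show "(\<lambda>s. exp (- g 0) * exp (- c * s)) integrable_on {u..}" using Bint by blast
    show "\<bar>1 / f s\<bar> \<le> exp (- g 0) * exp (- c * s)" if "s \<in> {u..}" for s
      using bnd[of s] that \<open>u \<ge> 0\<close> unfolding finv by simp
  qed simp
  have F_le: "F u \<le> B u" if "u \<ge> 0" for u
  proof -
    have "F u \<le> integral {u..} (\<lambda>s. exp (- g 0) * exp (- c * s))"
      unfolding F_def Fint_def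
      by (rule integral_le[OF eint[OF that] has_integral_integrable[OF Bint[of u]]])
         (use bnd that in \<open>auto simp: finv\<close>)
    also have "\<dots> = B u" by (rule integral_unique[OF Bint])
    finally show ?thesis .
  qed
  have F_ge: "F u \<ge> 0" if "u \<ge> 0" for u
    unfolding F_def Fint_def using eint[OF that] by (intro integral_nonneg) (auto simp: f_def)
  have F_split: "F u = F 0 - integral {0..u} (\<lambda>s. 1 / f s)" if "u \<ge> 0" for u
  proof -
    have cont: "continuous_on {0..u} (\<lambda>s. 1 / f s)"
      unfolding finv by (intro continuous_intros continuous_on_subset[OF g_cont]) auto
    have "((\<lambda>s. 1 / f s) has_integral (integral {0..u} (\<lambda>s. 1 / f s) + F u)) ({0..u} \<union> {u..})"
      unfolding F_def Fint_def
    proof (rule has_integral_Un)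
      show "((\<lambda>s. 1 / f s) has_integral integral {0..u} (\<lambda>s. 1 / f s)) {0..u}"
        using integrable_continuous_interval[OF cont] by blast
      show "((\<lambda>s. 1 / f s) has_integral integral {u..} (\<lambda>s. 1 / f s)) {u..}"
        using eint[OF that] by blast
      have "{0..u} \<inter> {u..} = {u}" using that by auto
      then show "negligible ({0..u} \<inter> {u..})" by simp
    qed
    moreover have "{0..u} \<union> {u..} = {0::real..}" using that by auto
    ultimately have "((\<lambda>s. 1 / f s) has_integral (integral {0..u} (\<lambda>s. 1 / f s) + F u)) {0..}"
      by simp
    then have "F 0 = integral {0..u} (\<lambda>s. 1 / f s) + F u"
      unfolding F_def Fint_def by (rule integral_unique)
    then show ?thesis by simp
  qed
  have dF: "(F has_real_derivative - (1 / f u)) (at u within {0..})" if "u \<ge> 0" for u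
  proof -
    have cont: "continuous_on {0..u+1} (\<lambda>s. 1 / f s)"
      unfolding finv by (intro continuous_intros continuous_on_subset[OF g_cont]) auto
    have "((\<lambda>x. integral {0..x} (\<lambda>s. 1 / f s)) has_real_derivative 1 / f u) (at u within {0..u+1})"
      by (rule integral_has_real_derivative[OF cont]) (use that in auto)
    then have "((\<lambda>x. F 0 - integral {0..x} (\<lambda>s. 1 / f s)) has_real_derivative - (1 / f u)) (at u within {0..})"
    proof -
      have eq: "at u within {0..} = at u within {0..u+1}" by (rule at_Ici_Icc) simp
      have "((\<lambda>x. F 0 - integral {0..x} (\<lambda>s. 1 / f s)) has_real_derivative 0 - 1 / f u) (at u within {0..u+1})"
        by (intro DERIV_diff DERIV_const) fact
      then show ?thesis unfolding eq by simp
    qed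
    then show ?thesis
    proof (rule has_field_derivative_transform_within[OF _ zero_less_one])
      show "u \<in> {0..}" using that by simp
      fix x :: real assume "x \<in> {0..}"
      then show "F 0 - integral {0..x} (\<lambda>s. 1 / f s) = F x" by (metis F_split atLeast_iff)
    qed
  qed
  have F_lim: "(F \<longlongrightarrow> 0) at_top"
  proof (rule tendsto_sandwich[of "\<lambda>_. 0" _ _ B])
    show "\<forall>\<^sub>F n in at_top. 0 \<le> F n" using eventually_ge_at_top[of 0] by eventually_elim (rule F_ge)
    show "\<forall>\<^sub>F n in at_top. F n \<le> B n" using eventually_ge_at_top[of 0] by eventually_elim (rule F_le)
    show "(B \<longlongrightarrow> 0) at_top" unfolding B_def using exp_bound_lim[OF c_pos] by simp
  qed simp
  define \<epsilon> where "\<epsilon> u = g2 u / (g1 u)\<^sup>2" for u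
  have eps_pos: "\<epsilon> u > 0" if "u \<ge> 0" for u
    unfolding \<epsilon>_def using g1_pos[OF that] g2_pos[OF that] by simp
  define eps' where "eps' x = (g3 x * (g1 x)\<^sup>2 - g2 x * (2 * g1 x * g2 x)) / ((g1 x)\<^sup>2 * (g1 x)\<^sup>2)" for x
  have deps: "(\<epsilon> has_real_derivative eps' x) (at x within {0..})" if "x \<ge> 0" for x
    unfolding \<epsilon>_def eps'_def using g2[OF that] g3[OF that] g1_pos[OF that]
    by (auto intro!: derivative_eq_intros simp: power2_eq_square)
  have eps'_neg: "eps' x < 0" if "x \<ge> 0" for x
  proof -
    have "g3 x * (g1 x)\<^sup>2 - g2 x * (2 * g1 x * g2 x) = - g1 x * (2 * (g2 x)\<^sup>2 - g1 x * g3 x)"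
      by (simp add: power2_eq_square algebra_simps)
    also have "\<dots> < 0" using g1_pos[OF that] g_ineq2[OF that] by simp
    finally show ?thesis unfolding eps'_def using g1_pos[OF that] by (simp add: divide_neg_pos)
  qed
  have eps_mono: "\<epsilon> v \<le> \<epsilon> u" if "0 \<le> u" "u \<le> v" for u v
  proof -
    have "- \<epsilon> u \<le> - \<epsilon> v"
      by (rule mono_Ici[of 0 "\<lambda>u. - \<epsilon> u" "\<lambda>u. - eps' u"])
         (use that deps eps'_neg in \<open>auto intro!: derivative_eq_intros less_imp_le\<close>)
    then show ?thesis by simp
  qed
  have eps_small: "\<exists>u\<ge>0. \<epsilon> u < \<delta>" if "\<delta> > 0" for \<delta>
  proof (rule ccontr)
    assume "\<not> (\<exists>u\<ge>0. \<epsilon> u < \<delta>)"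
    then have ge: "\<epsilon> u \<ge> \<delta>" if "u \<ge> 0" for u using that by force
    define u where "u = 1 / (c * \<delta>)"
    have u0: "u \<ge> 0" unfolding u_def using c_pos \<open>\<delta> > 0\<close> by simp
    have dh: "((\<lambda>u. - 1 / g1 u - \<delta> * u) has_real_derivative \<epsilon> x - \<delta>) (at x within {0..})" if "x \<ge> 0" for x
      unfolding \<epsilon>_def using g2[OF that] g1_pos[OF that]
      by (auto intro!: derivative_eq_intros simp: power2_eq_square)
    have "- 1 / g1 0 - \<delta> * 0 \<le> - 1 / g1 u - \<delta> * u"
      by (rule mono_Ici[OF dh]) (use ge u0 in auto)
    then have "\<delta> * u \<le> 1 / c - 1 / g1 u" unfolding c_def by simp
    moreover have "1 / g1 u > 0" using g1_pos[OF u0] by simp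
    moreover have "\<delta> * u = 1 / c" unfolding u_def using \<open>\<delta> > 0\<close> by simp
    ultimately show False by simp
  qed
  have eps_lim: "(\<epsilon> \<longlongrightarrow> 0) at_top"
  proof (rule order_tendstoI)
    fix a :: real assume "a < 0"
    show "\<forall>\<^sub>F x in at_top. a < \<epsilon> x"
      using eventually_ge_at_top[of 0] by eventually_elim (use eps_pos \<open>a < 0\<close> in force)
  next
    fix a :: real assume "0 < a"
    then obtain u where u: "u \<ge> 0" "\<epsilon> u < a" using eps_small by blast
    show "\<forall>\<^sub>F x in at_top. \<epsilon> x < a"
      using eventually_ge_at_top[of u] by eventually_elim (use eps_mono u in force)
  qed
  have lim2: "((\<lambda>u. (f1 u)\<^sup>2 / (f u * f2 u)) \<longlongrightarrow> 1) at_top"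
  proof -
    have "((\<lambda>u. 1 / (1 + \<epsilon> u)) \<longlongrightarrow> 1 / (1 + 0)) at_top"
      by (intro tendsto_intros eps_lim) auto
    moreover have "\<forall>\<^sub>F u in at_top. 1 / (1 + \<epsilon> u) = (f1 u)\<^sup>2 / (f u * f2 u)"
      using eventually_ge_at_top[of 0]
    proof eventually_elim
      case (elim u)
      have p: "g1 u > 0" "g2 u > 0" using g1_pos[OF elim] g2_pos[OF elim] by auto
      have "(f1 u)\<^sup>2 / (f u * f2 u) = ((g1 u)\<^sup>2 * (exp (g u))\<^sup>2) / ((g2 u + (g1 u)\<^sup>2) * (exp (g u))\<^sup>2)"
        unfolding f1e[OF elim] f2e[OF elim] f_def by (simp add: power2_eq_square mult_ac)
      also have "\<dots> = (g1 u)\<^sup>2 / (g2 u + (g1 u)\<^sup>2)" by simp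
      also have "\<dots> = 1 / (1 + \<epsilon> u)" unfolding \<epsilon>_def using p by (simp add: field_simps)
      finally show ?case by simp
    qed
    ultimately show ?thesis by (simp add: Lim_transform_eventually)
  qed
  define \<phi> where "\<phi> u = exp (- g u) / g1 u" for u
  have dphi: "(\<phi> has_real_derivative - exp (- g x) * (1 + \<epsilon> x)) (at x within {0..})" if "x \<ge> 0" for x
    unfolding \<phi>_def \<epsilon>_def using g1[OF that] g2[OF that] g1_pos[OF that]
    by (auto intro!: derivative_eq_intros simp: power2_eq_square field_simps)
  have phi_pos: "\<phi> u > 0" if "u \<ge> 0" for u
    unfolding \<phi>_def using g1_pos[OF that] by simp
  have phi_le: "\<phi> u \<le> B u" if "u \<ge> 0" for u
    unfolding \<phi>_def B_def using bnd[OF that] g1_ge[OF that] c_pos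
    by (simp add: frac_le)
  have phi_lim: "(\<phi> \<longlongrightarrow> 0) at_top"
  proof (rule tendsto_sandwich[of "\<lambda>_. 0" _ _ B])
    show "\<forall>\<^sub>F n in at_top. 0 \<le> \<phi> n" using eventually_ge_at_top[of 0] by eventually_elim (use phi_pos in force)
    show "\<forall>\<^sub>F n in at_top. \<phi> n \<le> B n" using eventually_ge_at_top[of 0] by eventually_elim (rule phi_le)
    show "(B \<longlongrightarrow> 0) at_top" unfolding B_def using exp_bound_lim[OF c_pos] by simp
  qed simp
  have F_lt_phi: "F u < \<phi> u" if "u \<ge> 0" for u
  proof -
    have "\<phi> u - F u > 0"
    proof (rule lim_pos_Ici[of u "\<lambda>s. \<phi> s - F s" "\<lambda>s. - exp (- g s) * (1 + \<epsilon> s) - (- (1 / f s))"])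
      fix x assume x: "x \<ge> u"
      then have x0: "x \<ge> 0" using that by simp
      show "((\<lambda>s. \<phi> s - F s) has_real_derivative - exp (- g x) * (1 + \<epsilon> x) - (- (1 / f x))) (at x within {u..})"
        by (rule has_field_derivative_subset[OF DERIV_diff[OF dphi[OF x0] dF[OF x0]]]) (use that in auto)
      show "- exp (- g x) * (1 + \<epsilon> x) - (- (1 / f x)) < 0"
        using eps_pos[OF x0] by (simp add: finv algebra_simps)
    next
      show "((\<lambda>s. \<phi> s - F s) \<longlongrightarrow> 0) at_top" using tendsto_diff[OF phi_lim F_lim] by simp
    qed
    then show ?thesis by simp
  qed
  have F_ge_phi: "(1 + \<epsilon> u) * F u \<ge> \<phi> u" if "u \<ge> 0" for u
  proof -
    have "(1 + \<epsilon> u) * F u - \<phi> u \<ge> 0"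
    proof (rule lim_nonneg_Ici[of u "\<lambda>s. (1 + \<epsilon> u) * F s - \<phi> s" "\<lambda>s. (1 + \<epsilon> u) * (- (1 / f s)) - (- exp (- g s) * (1 + \<epsilon> s))"])
      fix x assume x: "x \<ge> u"
      then have x0: "x \<ge> 0" using that by simp
      show "((\<lambda>s. (1 + \<epsilon> u) * F s - \<phi> s) has_real_derivative (1 + \<epsilon> u) * (- (1 / f x)) - (- exp (- g x) * (1 + \<epsilon> x))) (at x within {u..})"
        by (rule has_field_derivative_subset[OF DERIV_diff[OF DERIV_cmult[OF dF[OF x0]] dphi[OF x0]]]) (use that in auto)
      have "\<epsilon> x \<le> \<epsilon> u" by (rule eps_mono) (use that x in auto)
      then show "(1 + \<epsilon> u) * (- (1 / f x)) - (- exp (- g x) * (1 + \<epsilon> x)) \<le> 0"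
        by (simp add: finv algebra_simps)
    next
      show "((\<lambda>s. (1 + \<epsilon> u) * F s - \<phi> s) \<longlongrightarrow> 0) at_top"
        using tendsto_diff[OF tendsto_mult[OF tendsto_const F_lim] phi_lim] by simp
    qed
    then show ?thesis by simp
  qed
  have F_pos: "F u > 0" if "u \<ge> 0" for u
    using F_ge_phi[OF that] phi_pos[OF that] eps_pos[OF that]
    by (smt (verit) mult_nonneg_nonpos)
  have prod_up: "f1 u * F u < 1" if "u \<ge> 0" for u
    using F_lt_phi[OF that] g1_pos[OF that] unfolding \<phi>_def f1e[OF that]
    by (simp add: exp_minus field_simps)
  have prod_lo: "1 / (1 + \<epsilon> u) \<le> f1 u * F u" if "u \<ge> 0" for u
    using F_ge_phi[OF that] g1_pos[OF that] eps_pos[OF that] unfolding \<phi>_def f1e[OF that]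
    by (simp add: exp_minus field_simps)
  have lim1: "((\<lambda>u. f1 u * F u) \<longlongrightarrow> 1) at_top"
  proof (rule tendsto_sandwich[of "\<lambda>u. 1 / (1 + \<epsilon> u)" _ _ "\<lambda>_. 1"])
    show "\<forall>\<^sub>F n in at_top. 1 / (1 + \<epsilon> n) \<le> f1 n * F n" using eventually_ge_at_top[of 0] by eventually_elim (rule prod_lo)
    show "\<forall>\<^sub>F n in at_top. f1 n * F n \<le> 1" using eventually_ge_at_top[of 0] by eventually_elim (use prod_up in force)
    have "((\<lambda>u. 1 / (1 + \<epsilon> u)) \<longlongrightarrow> 1 / (1 + 0)) at_top"
      by (intro tendsto_intros eps_lim) auto
    then show "((\<lambda>u. 1 / (1 + \<epsilon> u)) \<longlongrightarrow> 1) at_top" by simp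
  qed simp
  have part2: "2 * f u * (f2 u)\<^sup>2 - (f1 u)\<^sup>2 * f2 u - f u * f1 u * f3 u > 0" if "u \<ge> 0" for u
  proof -
    have "2 * f u * (f2 u)\<^sup>2 - (f1 u)\<^sup>2 * f2 u - f u * f1 u * f3 u
        = (exp (g u))^3 * (2 * (g2 u)\<^sup>2 - g1 u * g3 u)"
      unfolding f1e[OF that] f2e[OF that] f3e[OF that] f_def
      by (simp add: power2_eq_square power3_eq_cube algebra_simps)
    then show ?thesis using g_ineq2[OF that] by simp
  qed
  define Dn where "Dn u = g2 u + (g1 u)\<^sup>2" for u
  define \<psi> where "\<psi> u = exp (- g u) * g1 u / Dn u" for u
  define N' where "N' x = exp (- g x) * (- g1 x) * g1 x + g2 x * exp (- g x)" for x
  define Dn' where "Dn' x = g3 x + 2 * g1 x * g2 x" for x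
  define psi' where "psi' x = (N' x * Dn x - exp (- g x) * g1 x * Dn' x) / (Dn x * Dn x)" for x
  have Dn_pos: "Dn x > 0" if "x \<ge> 0" for x unfolding Dn_def using g2_pos[OF that] by (intro add_pos_nonneg) simp_all
  have dpsi: "(\<psi> has_real_derivative psi' x) (at x within {0..})" if "x \<ge> 0" for x
  proof -
    have dN: "((\<lambda>u. exp (- g u) * g1 u) has_real_derivative N' x) (at x within {0..})"
      unfolding N'_def using g1[OF that] g2[OF that] by (auto intro!: derivative_eq_intros)
    have dD: "(Dn has_real_derivative Dn' x) (at x within {0..})"
      unfolding Dn_def Dn'_def using g2[OF that] g3[OF that] by (auto intro!: derivative_eq_intros)
    show ?thesis
      unfolding \<psi>_def psi'_def using DERIV_divide[OF dN dD] Dn_pos[OF that] by simp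
  qed
  have psi'_bound: "- (1 / f x) - psi' x < 0" if "x \<ge> 0" for x
  proof -
    have "- (1 / f x) - psi' x = - exp (- g x) * (2 * (g2 x)\<^sup>2 - g1 x * g3 x) / (Dn x * Dn x)"
      unfolding finv psi'_def N'_def Dn'_def using Dn_pos[OF that]
      by (simp add: field_simps) (simp add: Dn_def power2_eq_square algebra_simps)
    also have "\<dots> < 0" using g_ineq2[OF that] Dn_pos[OF that]
      by (simp add: divide_neg_pos mult_pos_pos)
    finally show ?thesis .
  qed
  have psi_nn: "\<psi> u \<ge> 0" if "u \<ge> 0" for u
    unfolding \<psi>_def using g1_pos[OF that] Dn_pos[OF that] by simp
  have psi_le: "\<psi> u \<le> \<phi> u" if "u \<ge> 0" for u
  proof -
    have "g1 u / Dn u \<le> 1 / g1 u"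
      using g1_pos[OF that] g2_pos[OF that] Dn_pos[OF that] unfolding Dn_def
      by (simp add: field_simps power2_eq_square)
    then show ?thesis unfolding \<psi>_def \<phi>_def
      using mult_left_mono[of "g1 u / Dn u" "1 / g1 u" "exp (- g u)"] by simp
  qed
  have psi_lim: "(\<psi> \<longlongrightarrow> 0) at_top"
  proof (rule tendsto_sandwich[of "\<lambda>_. 0" _ _ \<phi>])
    show "\<forall>\<^sub>F n in at_top. 0 \<le> \<psi> n" using eventually_ge_at_top[of 0] by eventually_elim (rule psi_nn)
    show "\<forall>\<^sub>F n in at_top. \<psi> n \<le> \<phi> n" using eventually_ge_at_top[of 0] by eventually_elim (rule psi_le)
  qed (simp_all add: phi_lim)
  have psi_eq: "f1 u / (f u * f2 u) = \<psi> u" if "u \<ge> 0" for u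
  proof -
    have "f1 u / (f u * f2 u) = (g1 u * exp (g u)) / ((Dn u * exp (g u)) * exp (g u))"
      unfolding f1e[OF that] f2e[OF that] f_def Dn_def by (simp add: mult_ac)
    also have "\<dots> = g1 u / (Dn u * exp (g u))" by simp
    also have "\<dots> = \<psi> u" unfolding \<psi>_def by (simp add: exp_minus field_simps)
    finally show ?thesis .
  qed
  have part3: "F u - \<psi> u > 0" if "u \<ge> 0" for u
  proof (rule lim_pos_Ici[of u "\<lambda>s. F s - \<psi> s" "\<lambda>s. - (1 / f s) - psi' s"])
    fix x assume x: "x \<ge> u"
    then have x0: "x \<ge> 0" using that by simp
    show "((\<lambda>s. F s - \<psi> s) has_real_derivative - (1 / f x) - psi' x) (at x within {u..})"
      by (rule has_field_derivative_subset[OF DERIV_diff[OF dF[OF x0] dpsi[OF x0]]]) (use that in auto)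
    show "- (1 / f x) - psi' x < 0" by (rule psi'_bound[OF x0])
  next
    show "((\<lambda>s. F s - \<psi> s) \<longlongrightarrow> 0) at_top" using tendsto_diff[OF F_lim psi_lim] by simp
  qed
  have f_pos: "f u > 0" for u unfolding f_def by simp
  have f2_pos: "f2 u > 0" if "u \<ge> 0" for u
    unfolding f2e[OF that] using Dn_pos[OF that] unfolding Dn_def by simp
  have F_cont: "continuous_on {0..} F" by (rule DERIV_continuous_on[OF dF]) auto
  have F_smono: "F v < F u" if "0 \<le> u" "u < v" for u v
  proof -
    have "- F u < - F v"
      by (rule smono_Ici[of 0 "\<lambda>s. - F s" "\<lambda>s. - (- (1 / f s))"])
         (use that f_pos DERIV_minus[OF dF] in auto)
    then show ?thesis by simp
  qed
  have F_inj: "inj_on F {0..}"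
  proof (rule inj_onI)
    fix u v :: real assume "u \<in> {0..}" "v \<in> {0..}" "F u = F v"
    then show "u = v" using F_smono[of u v] F_smono[of v u] by (cases u v rule: linorder_cases) auto
  qed
  define \<eta> where "\<eta> = eta f"
  have eta_eq: "\<eta> y = the_inv_into {0..} F (exp (- y))" for y by (simp add: \<eta>_def eta_def F_def)
  define y0 where "y0 = - ln (F 0)"
  have F0: "F 0 > 0" using F_pos by simp
  have eta_prop: "\<eta> y \<ge> 0 \<and> F (\<eta> y) = exp (- y)" if "y \<ge> y0" for y
  proof -
    have "exp (- y) \<le> exp (- y0)" using that by simp
    also have "\<dots> = F 0" unfolding y0_def using F0 by simp
    finally have le0: "exp (- y) \<le> F 0" .
    have "\<forall>\<^sub>F u in at_top. F u < exp (- y)" using order_tendstoD(2)[OF F_lim] by simp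
    then obtain N where N: "\<And>u. u \<ge> N \<Longrightarrow> F u < exp (- y)" by (auto simp: eventually_at_top_linorder)
    define M where "M = max N 0"
    have "\<exists>x. 0 \<le> x \<and> x \<le> M \<and> F x = exp (- y)"
      by (rule IVT2') (use N[of M] le0 continuous_on_subset[OF F_cont] in \<open>auto simp: M_def\<close>)
    then have im: "exp (- y) \<in> F ` {0..}" by force
    show ?thesis unfolding eta_eq
      using the_inv_into_into[OF F_inj im order_refl] f_the_inv_into_f[OF F_inj im] by simp
  qed
  have eta_top: "filterlim \<eta> at_top at_top"
    unfolding filterlim_at_top
  proof
    fix Z :: real
    define Z' where "Z' = max Z 0"
    have FZ: "F Z' > 0" using F_pos[of Z'] by (simp add: Z'_def)
    show "\<forall>\<^sub>F y in at_top. Z \<le> \<eta> y"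
      using eventually_ge_at_top[of "max y0 (- ln (F Z') + 1)"]
    proof eventually_elim
      case (elim y)
      then have yy: "y \<ge> y0" "y > - ln (F Z')" by auto
      have "Z' \<le> \<eta> y"
      proof (rule ccontr)
        assume "\<not> Z' \<le> \<eta> y"
        then have "F Z' < F (\<eta> y)" using F_smono[of "\<eta> y" Z'] eta_prop[OF yy(1)] by simp
        then have "F Z' < exp (- y)" using eta_prop[OF yy(1)] by simp
        then have "ln (F Z') < ln (exp (- y))" using FZ by (subst ln_less_cancel_iff) auto
        then show False using yy(2) by simp
      qed
      then show ?case by (simp add: Z'_def)
    qed
  qed
  have hfun_eq: "hfun f f1 y = 1 - f1 (\<eta> y) * F (\<eta> y)" for y
    by (simp add: hfun_def \<eta>_def F_def)
  have part4: "(hfun f f1 \<longlongrightarrow> 0) at_top"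
  proof -
    have "((\<lambda>y. f1 (\<eta> y) * F (\<eta> y)) \<longlongrightarrow> 1) at_top"
      using filterlim_compose[of "\<lambda>u. f1 u * F u" "nhds 1" at_top \<eta> at_top, OF lim1 eta_top] .
    then have "((\<lambda>y. 1 - f1 (\<eta> y) * F (\<eta> y)) \<longlongrightarrow> 1 - 1) at_top"
      by (intro tendsto_diff tendsto_const)
    then show ?thesis unfolding hfun_eq[abs_def] by simp
  qed
  have part5: "\<exists>D. (hfun f f1 has_real_derivative D) (at y within {y0..}) \<and> D < 0" if y: "y \<ge> y0" for y
  proof -
    define S where "S = {y0..}"
    define u0 where "u0 = \<eta> y"
    have u0: "u0 \<ge> 0" "F u0 = exp (- y)" using eta_prop[OF y] by (auto simp: u0_def)
    define M where "M = \<eta> (y + 1)"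
    have M: "M \<ge> 0" "F M = exp (- (y + 1))" using eta_prop[of "y+1"] y by (auto simp: M_def)
    define ginv where "ginv = the_inv_into {0..} F"
    have cK: "continuous_on (F ` {0..M}) ginv"
    proof (rule continuous_on_inv)
      show "continuous_on {0..M} F" by (rule continuous_on_subset[OF F_cont]) auto
      show "\<forall>x\<in>{0..M}. ginv (F x) = x" unfolding ginv_def
        using the_inv_into_f_f[OF F_inj] by auto
    qed simp
    have inK: "exp (- z) \<in> F ` {0..M}" if "z \<in> {y0..y+1}" for z
    proof -
      have ez: "\<eta> z \<ge> 0" "F (\<eta> z) = exp (- z)" using eta_prop[of z] that by auto
      have "\<eta> z \<le> M"
      proof (rule ccontr)
        assume "\<not> \<eta> z \<le> M"
        then have "F (\<eta> z) < F M" using F_smono[of M "\<eta> z"] M by simp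
        then have "exp (- z) < exp (- (y + 1))" using ez M by simp
        then show False using that by simp
      qed
      then show ?thesis using ez by (auto intro!: image_eqI[of _ F "\<eta> z"])
    qed
    have "continuous_on {y0..y+1} (\<lambda>z. ginv (exp (- z)))"
      by (rule continuous_on_compose2[OF cK]) (use inK in \<open>auto intro!: continuous_intros\<close>)
    then have "continuous_on {y0..y+1} \<eta>" unfolding ginv_def eta_eq[abs_def] .
    then have "(\<eta> \<longlongrightarrow> \<eta> y) (at y within {y0..y+1})"
      using y by (simp add: continuous_on_def)
    then have eta_cont: "(\<eta> \<longlongrightarrow> u0) (at y within S)"
      unfolding S_def u0_def using at_Ici_Icc[of y "y+1" y0] by simp
    define G where "G u = - ln (F u)" for u
    define G' where "G' = - ((1 / F u0) * (- (1 / f u0)))"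
    have dG: "(G has_real_derivative G') (at u0 within {0..})"
      unfolding G_def[abs_def] G'_def
      by (intro DERIV_minus DERIV_chain2[OF DERIV_ln_divide dF[OF u0(1)]] F_pos u0(1))
    have G'_nz: "G' \<noteq> 0" unfolding G'_def using F_pos[OF u0(1)] f_pos[of u0] by simp
    have deta: "(\<eta> has_real_derivative 1 / G') (at y within S)"
    proof (rule inv_deriv[OF dG G'_nz eta_cont])
      fix z assume "z \<in> S"
      then show "\<eta> z \<in> {0..} \<and> G (\<eta> z) = z" using eta_prop[of z] by (auto simp: S_def G_def)
    qed (auto simp: u0_def S_def y)
    have G'inv: "1 / G' = f u0 * F u0" unfolding G'_def using F_pos[OF u0(1)] f_pos[of u0] by simp
    have img: "\<eta> ` S \<subseteq> {0..}" using eta_prop by (auto simp: S_def)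
    have df1: "(f1 has_real_derivative f2 u0) (at (\<eta> y) within (\<eta> ` S))"
      unfolding u0_def[symmetric] by (rule has_field_derivative_subset[OF f2[OF u0(1)] img])
    have dcomp: "((f1 \<circ> \<eta>) has_real_derivative f2 u0 * (1 / G')) (at y within S)"
      by (rule DERIV_image_chain[OF df1 deta])
    have dexp: "((\<lambda>z. exp (- z)) has_real_derivative - exp (- y)) (at y within S)"
      by (auto intro!: derivative_eq_intros)
    define D where "D = 0 - (f2 u0 * (1 / G') * exp (- y) + - exp (- y) * (f1 \<circ> \<eta>) y)"
    have dh: "((\<lambda>z. 1 - (f1 \<circ> \<eta>) z * exp (- z)) has_real_derivative D) (at y within S)"
      unfolding D_def by (intro DERIV_diff DERIV_const DERIV_mult dcomp dexp)
    have "(hfun f f1 has_real_derivative D) (at y within S)"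
    proof (rule has_field_derivative_transform_within[OF dh zero_less_one])
      show "y \<in> S" using y by (simp add: S_def)
      fix z assume "z \<in> S"
      then show "1 - (f1 \<circ> \<eta>) z * exp (- z) = hfun f f1 z"
        using eta_prop[of z] by (simp add: hfun_eq S_def)
    qed
    moreover have "D < 0"
    proof -
      have "F u0 - f1 u0 / (f u0 * f2 u0) > 0" using part3[OF u0(1)] psi_eq[OF u0(1)] by simp
      then have "f1 u0 < f u0 * f2 u0 * F u0"
        using f_pos[of u0] f2_pos[OF u0(1)] by (simp add: field_simps)
      moreover have "D = exp (- y) * (f1 u0 - f u0 * f2 u0 * F u0)"
        unfolding D_def G'inv u0_def[symmetric] by (simp add: algebra_simps u0_def)
      ultimately show ?thesis by (simp add: mult_pos_neg)
    qed
    ultimately show ?thesis unfolding S_def y0_def by blast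
  qed
  show ?thesis
    unfolding F_def[symmetric]
    using lim1 lim2 part2 part3 psi_eq part4 part5 unfolding y0_def by auto
qed

end
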